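(* Let $t_o<t_f$ be nonnegative integers, let $p:\{t_o,\dots,t_f-1\}\to\mathbb{R}$ and $q:\{t_o,\dots,t_f-1\}\to\mathbb{R}_{\ge0}$ satisfy $q(t)=0\implies p(t)=0$ for every $t$, and let $r(\tau)=\alpha\tau$ for integers $\tau>0$, with $\alpha\in\mathbb{R}$. For integers $t_o\le t_0<t_1\le t_f$ with $\sum_{t=t_0}^{t_1-1}q(t)>0$ define $$\psi(t_0,t_1)=\frac{\sum_{t=t_0}^{t_1-1}p(t)+r(t_1-t_0)}{\sum_{t=t_0}^{t_1-1}q(t)}.$$ Let $\Psi$ be the set of integer pairs with $t_o\le t_0<t_1\le t_f$, $\Psi_q=\{(t_0,t_1)\in\Psi:q(t)=0\ \text{for all } t_0\le t<t_1\}$, and $\tilde\Psi_q=\{t\in\{t_o,\dots,t_f-1\}:q(t)=0\}$. Then: (i) if $r(\tau)\le0$ for all $\tau\in\mathbb{Z}_{>0}$, $\displaystyle\max_{(t_0,t_1)\in\Psi\setminus\Psi_q}\psi(t_0,t_1)=\max_{t\in\{t_o,\dots,t_f-1\}\setminus\tilde\Psi_q}\psi(t,t+1)$; (ii) if $r(\tau)\ge0$ for all $\tau\in\mathbb{Z}_{>0}$, $\displaystyle\min_{(t_0,t_1)\in\Psi\setminus\Psi_q}\psi(t_0,t_1)=\min_{t\in\{t_o,\dots,t_f-1\}\setminus\tilde\Psi_q}\psi(t,t+1)$; where $\psi(t,t+1)=\dfrac{p(t)+r(1)}{q(t)}$.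
   Context: This is the discrete-time fractional function $\frac{\sum p+r}{\sum q+s}$ with the discrete linear map $s$ in the denominator identically zero; $r:\mathbb{Z}_{>0}\to\mathbb{R}$ is a discrete linear mapping. *)

theory Defs
  imports Main "HOL.Real"
begin

definition psi :: "(nat \<Rightarrow> real) \<Rightarrow> (nat \<Rightarrow> real) \<Rightarrow> (int \<Rightarrow> real) \<Rightarrow> nat \<Rightarrow> nat \<Rightarrow> real" where
  "psi p q r t0 t1 = ((\<Sum>t=t0..<t1. p t) + r (int t1 - int t0)) / (\<Sum>t=t0..<t1. q t)"

definition Psi :: "nat \<Rightarrow> nat \<Rightarrow> (nat \<times> nat) set" where
  "Psi to tf = {(t0, t1). to \<le> t0 \<and> t0 < t1 \<and> t1 \<le> tf}"

definition Psi_q :: "(nat \<Rightarrow> real) \<Rightarrow> nat \<Rightarrow> nat \<Rightarrow> (nat \<times> nat) set" where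
  "Psi_q q to tf = {(t0, t1) \<in> Psi to tf. \<forall>t. t0 \<le> t \<and> t < t1 \<longrightarrow> q t = 0}"

definition Psi_q_tilde :: "(nat \<Rightarrow> real) \<Rightarrow> nat \<Rightarrow> nat \<Rightarrow> nat set" where
  "Psi_q_tilde q to tf = {t \<in> {to..<tf}. q t = 0}"

end

theory Submission
  imports Defs
begin

lemma sum_shift_alpha:
  fixes p :: "nat \<Rightarrow> real"
  shows "(\<Sum>t=t0..<t1. p t) + \<alpha> * real (t1 - t0) = (\<Sum>t=t0..<t1. p t + \<alpha>)"
  by (simp add: sum.distrib)

lemma key_le:
  fixes p q :: "nat \<Rightarrow> real" and r :: "int \<Rightarrow> real"
  assumes "\<forall>t\<in>{t0..<t1}. p t + \<alpha> \<le> M * q t" "sum q {t0..<t1} > 0" "t0 < t1"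
    "r (int t1 - int t0) = \<alpha> * of_int (int t1 - int t0)"
  shows "psi p q r t0 t1 \<le> M"
proof -
  have e: "of_int (int t1 - int t0) = real (t1 - t0)" using assms(3) by simp
  have "(\<Sum>t=t0..<t1. p t) + r (int t1 - int t0) = (\<Sum>t=t0..<t1. p t + \<alpha>)"
    using assms(4) e sum_shift_alpha by metis
  also have "\<dots> \<le> (\<Sum>t=t0..<t1. M * q t)" using assms(1) by (intro sum_mono) auto
  also have "\<dots> = M * sum q {t0..<t1}" by (simp add: sum_distrib_left)
  finally show ?thesis using assms(2) unfolding psi_def by (simp add: divide_le_eq)
qed

lemma key_ge:
  fixes p q :: "nat \<Rightarrow> real" and r :: "int \<Rightarrow> real"
  assumes "\<forall>t\<in>{t0..<t1}. p t + \<alpha> \<ge> M * q t" "sum q {t0..<t1} > 0" "t0 < t1"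
    "r (int t1 - int t0) = \<alpha> * of_int (int t1 - int t0)"
  shows "psi p q r t0 t1 \<ge> M"
proof -
  have e: "of_int (int t1 - int t0) = real (t1 - t0)" using assms(3) by simp
  have "(\<Sum>t=t0..<t1. p t) + r (int t1 - int t0) = (\<Sum>t=t0..<t1. p t + \<alpha>)"
    using assms(4) e sum_shift_alpha by metis
  also have "\<dots> \<ge> (\<Sum>t=t0..<t1. M * q t)" using assms(1) by (intro sum_mono) auto
  also have "(\<Sum>t=t0..<t1. M * q t) = M * sum q {t0..<t1}" by (simp add: sum_distrib_left)
  finally show ?thesis using assms(2) unfolding psi_def by (simp add: le_divide_eq)
qed

theorem corollary2:
  fixes p q :: "nat \<Rightarrow> real" and r :: "int \<Rightarrow> real" and \<alpha> :: real and to tf :: nat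
  assumes "to < tf"
    and "\<forall>t\<in>{to..<tf}. q t \<ge> 0"
    and "\<forall>t\<in>{to..<tf}. q t = 0 \<longrightarrow> p t = 0"
    and "\<forall>\<tau>::int. \<tau> > 0 \<longrightarrow> r \<tau> = \<alpha> * of_int \<tau>"
  shows "((\<forall>\<tau>::int. \<tau> > 0 \<longrightarrow> r \<tau> \<le> 0) \<longrightarrow>
            Max ((\<lambda>(t0, t1). psi p q r t0 t1) ` (Psi to tf - Psi_q q to tf))
          = Max ((\<lambda>t. psi p q r t (t + 1)) ` ({to..<tf} - Psi_q_tilde q to tf)))
       \<and> ((\<forall>\<tau>::int. \<tau> > 0 \<longrightarrow> r \<tau> \<ge> 0) \<longrightarrow>
            Min ((\<lambda>(t0, t1). psi p q r t0 t1) ` (Psi to tf - Psi_q q to tf))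
          = Min ((\<lambda>t. psi p q r t (t + 1)) ` ({to..<tf} - Psi_q_tilde q to tf)))"
proof -
  define A where "A = (\<lambda>(t0, t1). psi p q r t0 t1) ` (Psi to tf - Psi_q q to tf)"
  define D where "D = {to..<tf} - Psi_q_tilde q to tf"
  define B where "B = (\<lambda>t. psi p q r t (t + 1)) ` D"
  have D: "t \<in> D \<longleftrightarrow> to \<le> t \<and> t < tf \<and> q t > 0" for t
    using assms(2) unfolding D_def Psi_q_tilde_def by force
  have r1: "r 1 = \<alpha>" using assms(4) by simp
  have rpos: "r (int t1 - int t0) = \<alpha> * of_int (int t1 - int t0)" if "t0 < t1" for t0 t1 :: nat
    using assms(4) that by simp
  have psi1: "psi p q r t (t+1) = (p t + \<alpha>) / q t" for t
    unfolding psi_def using r1 by simp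
  have finA: "finite A"
  proof -
    have "Psi to tf \<subseteq> {..tf} \<times> {..tf}" unfolding Psi_def by auto
    then have "finite (Psi to tf)" using finite_subset by blast
    then show ?thesis unfolding A_def by auto
  qed
  have finB: "finite B" unfolding B_def D_def by auto
  have BA: "B \<subseteq> A"
  proof
    fix x assume "x \<in> B"
    then obtain t where t: "t \<in> D" "x = psi p q r t (t+1)" unfolding B_def by auto
    have "(t, t+1) \<in> Psi to tf - Psi_q q to tf"
      using t D[of t] unfolding Psi_def Psi_q_def by auto
    then show "x \<in> A" unfolding A_def using t by force
  qed
  have pairs: "\<exists>t\<in>D. t0 \<le> t \<and> t < t1" "sum q {t0..<t1} > 0" "t0 < t1"
    "\<forall>t\<in>{t0..<t1}. to \<le> t \<and> t < tf"
    if "(t0, t1) \<in> Psi to tf - Psi_q q to tf" for t0 t1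
  proof -
    from that obtain t where t: "t0 \<le> t" "t < t1" "q t \<noteq> 0" and b: "to \<le> t0" "t0 < t1" "t1 \<le> tf"
      unfolding Psi_def Psi_q_def by auto
    have "t \<in> {to..<tf}" using t b by simp
    then have "q t \<ge> 0" using assms(2) by blast
    then have qt: "q t > 0" using t(3) by simp
    have "t \<in> D" using D[of t] t b qt by simp
    then show "\<exists>t\<in>D. t0 \<le> t \<and> t < t1" using t by blast
    show "t0 < t1" by fact
    show "\<forall>t\<in>{t0..<t1}. to \<le> t \<and> t < tf" using b by auto
    have "sum q {t0..<t1} \<ge> q t"
      using t assms(2) b by (intro member_le_sum) auto
    then show "sum q {t0..<t1} > 0" using qt by simp
  qed
  have AeB: "A = {} \<longleftrightarrow> B = {}"
  proof
    assume "A = {}" then show "B = {}" using BA by auto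
  next
    assume "B = {}"
    then have "D = {}" unfolding B_def by auto
    then show "A = {}" unfolding A_def using pairs(1) by (metis (no_types, lifting) empty_iff image_is_empty prod.collapse subsetI subset_empty)
  qed
  have part1: "Max A = Max B" if neg: "\<forall>\<tau>::int. \<tau> > 0 \<longrightarrow> r \<tau> \<le> 0"
  proof (cases "B = {}")
    case True then show ?thesis using AeB by simp
  next
    case False
    have al: "\<alpha> \<le> 0" using neg[rule_format, of 1] r1 by simp
    define M where "M = Max B"
    have Mge: "(p t + \<alpha>) / q t \<le> M" if "t \<in> D" for t
      proof -
      have "psi p q r t (t+1) \<in> B" using that unfolding B_def by blast
      from Max_ge[OF finB this] show ?thesis unfolding M_def psi1 .
    qed
    have Mb: "p t + \<alpha> \<le> M * q t" if "to \<le> t" "t < tf" for t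
    proof (cases "q t > 0")
      case True
      then show ?thesis using Mge[of t] D[of t] that by (simp add: divide_le_eq mult.commute)
    next
      case False
      moreover have "q t \<ge> 0" using assms(2) that by simp
      ultimately have "q t = 0" by simp
      then show ?thesis using assms(3) that al by simp
    qed
    have "Max A \<le> M"
    proof (subst Max_le_iff)
      show "finite A" by fact
      show "A \<noteq> {}" using AeB False by simp
      show "\<forall>a\<in>A. a \<le> M"
      proof
        fix a assume "a \<in> A"
        then obtain t0 t1 where tt: "(t0, t1) \<in> Psi to tf - Psi_q q to tf" "a = psi p q r t0 t1"
          unfolding A_def by auto
        note P = pairs[OF tt(1)]
        show "a \<le> M" unfolding tt(2)
        proof (rule key_le)
          show "sum q {t0..<t1} > 0" by (rule P(2))
          show "t0 < t1" by (rule P(3))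
          show "r (int t1 - int t0) = \<alpha> * of_int (int t1 - int t0)" using rpos P(3) by blast
        qed (use P(4) Mb in auto)
      qed
    qed
    moreover have "M \<le> Max A" unfolding M_def using BA False finA by (rule Max_mono)
    ultimately show ?thesis unfolding M_def by simp
  qed
  have part2: "Min A = Min B" if neg: "\<forall>\<tau>::int. \<tau> > 0 \<longrightarrow> r \<tau> \<ge> 0"
  proof (cases "B = {}")
    case True then show ?thesis using AeB by simp
  next
    case False
    have al: "\<alpha> \<ge> 0" using neg[rule_format, of 1] r1 by simp
    define M where "M = Min B"
    have Mge: "(p t + \<alpha>) / q t \<ge> M" if "t \<in> D" for t
      proof -
      have "psi p q r t (t+1) \<in> B" using that unfolding B_def by blast
      from Min_le[OF finB this] show ?thesis unfolding M_def psi1 .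
    qed
    have Mb: "p t + \<alpha> \<ge> M * q t" if "to \<le> t" "t < tf" for t
    proof (cases "q t > 0")
      case True
      then show ?thesis using Mge[of t] D[of t] that by (simp add: le_divide_eq mult.commute)
    next
      case False
      moreover have "q t \<ge> 0" using assms(2) that by simp
      ultimately have "q t = 0" by simp
      then show ?thesis using assms(3) that al by simp
    qed
    have "M \<le> Min A"
    proof (subst Min_ge_iff)
      show "finite A" by fact
      show "A \<noteq> {}" using AeB False by simp
      show "\<forall>a\<in>A. M \<le> a"
      proof
        fix a assume "a \<in> A"
        then obtain t0 t1 where tt: "(t0, t1) \<in> Psi to tf - Psi_q q to tf" "a = psi p q r t0 t1"
          unfolding A_def by auto
        note P = pairs[OF tt(1)]
        show "M \<le> a" unfolding tt(2)
        proof (rule key_ge)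
          show "sum q {t0..<t1} > 0" by (rule P(2))
          show "t0 < t1" by (rule P(3))
          show "r (int t1 - int t0) = \<alpha> * of_int (int t1 - int t0)" using rpos P(3) by blast
        qed (use P(4) Mb in auto)
      qed
    qed
    moreover have "Min A \<le> M" unfolding M_def using BA False finA by (rule Min_antimono)
    ultimately show ?thesis unfolding M_def by simp
  qed
  show ?thesis using part1 part2 unfolding A_def B_def D_def by simp
qed

end
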